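(* Let $R>0$ and let $E\subset\mathbb{R}^d$ be a body. Then $$(\partial E_R)'_R = co_R(E)\,\cup\, E'_{2R}.$$
   Context: A body is a nonempty closed subset of $\mathbb{R}^d$. Fix $R>0$; for $x\in\mathbb{R}^d$ let $B(x)=\{y:|y-x|<R\}$ be the open ball of radius $R$ centered at $x$. For a set $A\subset\mathbb{R}^d$ and $\rho>0$ put $A_\rho=\{x:\operatorname{dist}(x,A)<\rho\}$ and $A'_\rho=\mathbb{R}^d\setminus A_\rho=\{x:\operatorname{dist}(x,A)\ge\rho\}$ (with $\emptyset'_\rho=\mathbb{R}^d$). For a body $E$, the $R$-hulloid is $co_R(E)=\bigcap\{\mathbb{R}^d\setminus B : B \text{ an open ball of radius } R,\ B\cap E=\emptyset\}$, with $co_R(E)=\mathbb{R}^d$ if there is no such ball. *)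

theory Defs
  imports "HOL-Analysis.Analysis"
begin

definition body :: "'a::euclidean_space set \<Rightarrow> bool" where
  "body E \<longleftrightarrow> E \<noteq> {} \<and> closed E"

text \<open>Open rho-neighbourhood: points at distance less than rho from A
  (for nonempty A this is dist(x,A) < rho; the empty set gives the empty set).\<close>
definition nbhd :: "'a::euclidean_space set \<Rightarrow> real \<Rightarrow> 'a set" where
  "nbhd A \<rho> = {x. \<exists>a\<in>A. dist x a < \<rho>}"

text \<open>Complement of the neighbourhood: dist(x,A) >= rho, equal to UNIV for A empty.\<close>
definition conbhd :: "'a::euclidean_space set \<Rightarrow> real \<Rightarrow> 'a set" where
  "conbhd A \<rho> = UNIV - nbhd A \<rho>"

definition hulloid :: "real \<Rightarrow> 'a::euclidean_space set \<Rightarrow> 'a set" where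
  "hulloid R E = \<Inter>{UNIV - ball x R | x. ball x R \<inter> E = {}}"

end

theory Submission
  imports Defs
begin

lemma nbhd_open: "open (nbhd E R)"
proof -
  have "nbhd E R = (\<Union>a\<in>E. ball a R)"
    by (auto simp: nbhd_def dist_commute)
  thus ?thesis by auto
qed

lemma hull_mem:
  assumes "x \<in> hulloid R E" "ball y R \<inter> E = {}"
  shows "R \<le> dist y x"
proof -
  have "UNIV - ball y R \<in> {UNIV - ball x R | x. ball x R \<inter> E = {}}"
    using assms(2) by blast
  hence "x \<in> UNIV - ball y R" using assms(1) unfolding hulloid_def by (rule InterD[rotated])
  thus ?thesis by simp
qed

theorem mainTheorem1:
  fixes E :: "'a::euclidean_space set" and R :: real
  assumes "R > 0" and "body E"
  shows "conbhd (frontier (nbhd E R)) R = hulloid R E \<union> conbhd E (2 * R)"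
proof -
  let ?U = "nbhd E R"
  have opU: "open ?U" by (rule nbhd_open)
  have frU: "y \<notin> ?U" if "y \<in> frontier ?U" for y
    using that opU by (simp add: frontier_def interior_open)
  have ballfr: "ball y R \<inter> E = {}" if "y \<in> frontier ?U" for y
    using frU[OF that] by (auto simp: nbhd_def dist_commute)
  show ?thesis
  proof
    show "conbhd (frontier ?U) R \<subseteq> hulloid R E \<union> conbhd E (2 * R)"
    proof
      fix x assume x: "x \<in> conbhd (frontier ?U) R"
      hence far: "\<And>y. y \<in> frontier ?U \<Longrightarrow> dist x y \<ge> R"
        by (auto simp: conbhd_def nbhd_def not_less)
      show "x \<in> hulloid R E \<union> conbhd E (2 * R)"
      proof (rule ccontr)
        assume "\<not> ?thesis"
        then obtain z where z: "ball z R \<inter> E = {}" "x \<in> ball z R"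
          by (auto simp: hulloid_def)
        from \<open>\<not> _\<close> obtain e where e: "e \<in> E" "dist x e < 2 * R"
          by (auto simp: conbhd_def nbhd_def)
        show False
        proof (cases "x \<in> ?U")
          case True
          have zU: "z \<notin> ?U" 
          proof
            assume "z \<in> ?U"
            then obtain a where "a \<in> E" "dist z a < R" by (auto simp: nbhd_def)
            thus False using z(1) by (auto simp: disjoint_iff)
          qed
          have "closed_segment x z \<inter> frontier ?U \<noteq> {}"
            by (rule connected_Int_frontier) (use True zU in auto)
          then obtain y where y: "y \<in> closed_segment x z" "y \<in> frontier ?U" by blast
          have "dist y x \<le> dist x z" using dist_in_closed_segment[OF y(1)] by simp
          moreover have "dist x z < R" using z(2) by (simp add: dist_commute)
          ultimately show False using far[OF y(2)] by (simp add: dist_commute)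
        next
          case False
          have eU: "e \<in> ?U" using e(1) \<open>R > 0\<close> unfolding nbhd_def by (intro CollectI bexI[of _ e]) auto
          have "closed_segment e x \<inter> frontier ?U \<noteq> {}"
            by (rule connected_Int_frontier) (use False eU in auto)
          then obtain y where y: "y \<in> closed_segment e x" "y \<in> frontier ?U" by blast
          have eq: "dist e x = dist e y + dist y x"
            using y(1) by (simp add: between between_mem_segment[symmetric])
          have "dist y e \<ge> R" using ballfr[OF y(2)] e(1) by (metis disjoint_iff mem_ball not_less)
          thus False using eq e(2) far[OF y(2)] by (simp add: dist_commute)
        qed
      qed
    qed
  next
    show "hulloid R E \<union> conbhd E (2 * R) \<subseteq> conbhd (frontier ?U) R"
    proof
      fix x assume x: "x \<in> hulloid R E \<union> conbhd E (2 * R)"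
      have "dist x y \<ge> R" if y: "y \<in> frontier ?U" for y
      proof (cases "x \<in> hulloid R E")
        case True
        show ?thesis using hull_mem[OF True ballfr[OF y]] by (simp add: dist_commute)
      next
        case False
        hence xe: "\<And>a. a \<in> E \<Longrightarrow> dist x a \<ge> 2 * R"
          using x by (auto simp: conbhd_def nbhd_def not_less)
        show ?thesis
        proof (rule ccontr)
          assume "\<not> ?thesis"
          hence d: "dist x y < R" by simp
          have "y \<in> closure ?U" using y by (simp add: frontier_def)
          then obtain u where u: "u \<in> ?U" "dist u y < R - dist x y"
            using d by (metis closure_approachable diff_gt_0_iff_gt)
          then obtain a where a: "a \<in> E" "dist u a < R" by (auto simp: nbhd_def)
          have "dist x a \<le> dist x y + dist y u + dist u a"
            by (metis add_mono dist_triangle order_trans order_refl)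
          also have "\<dots> < 2 * R" using u a by (simp add: dist_commute)
          finally show False using xe[OF a(1)] by simp
        qed
      qed
      thus "x \<in> conbhd (frontier ?U) R"
        by (auto simp: conbhd_def nbhd_def not_less)
    qed
  qed
qed

end
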